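(* Consider the ROSS algorithm described in the context and suppose Assumptions (A1), (A2), (A3) hold. Then for every round $t\ge1$, $$\mathbb{E}\left[\left\|\frac1N\sum_{i=1}^N\bar g^{[t]}_i\right\|^2\right]\le\frac{4\sigma^2}{\omega_{min}^4}+\frac{6\sigma^2}{N}+\frac{16\varsigma^2}{\omega_{min}^4}+\frac{32L^2}{N\omega_{min}^4}\sum_{i=1}^N\mathbb{E}\left[\left\|x^{[t-1]}_i-\bar x^{[t-1]}\right\|^2\right]+\left(\frac{16}{\omega_{min}^4}+6\right)\mathbb{E}\left[\left\|\frac1N\sum_{i=1}^N\nabla f_i\left(x^{[t-1]}_i\right)\right\|^2\right].$$
   Context: Setting: $N\ge1$ agents $\mathcal{N}=\{1,\dots,N\}$. $\mathbf{W}=(\omega_{i,j})\in[0,1]^{N\times N}$ is a symmetric doubly stochastic matrix ($\omega_{i,j}=\omega_{j,i}$, $\sum_{j}\omega_{i,j}=1$). $\mathcal{N}_i=\{j\in\mathcal{N}:\omega_{i,j}>0\}$ is the neighborhood of agent $i$ (the algorithm treats $i$ itself as a member of $\mathcal{N}_i$), and $\omega_{min}=\min_{i\in\mathcal{N},j\in\mathcal{N}_i}\omega_{i,j}$. Agent $i$ has a data distribution $\mathcal{D}_i$; $F(x;\xi)$ is a real-valued loss, differentiable in $x\in\mathbb{R}^d$; $f_i(x)=\mathbb{E}_{\xi\sim\mathcal{D}_i}[F(x;\xi)]$ and $\mathcal{F}(x)=\frac1N\sum_{i=1}^N f_i(x)$. A finite validation set $\mathcal{Q}$ is available to every agent, and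 $J(\xi;x)$ denotes the accuracy of model $x$ on sample $\xi$. Algorithm ROSS (learning rate $\gamma>0$, momentum coefficient $\alpha$): all agents start from a common point $x_i^{[0]}=x^{[0]}$ with $u_i^{[0]}=0$. In each round $t=1,2,\dots$, each agent $i$ draws a sample $\xi_{i,t}\sim\mathcal{D}_i$ (independently across agents and rounds) and for each $j\in\mathcal{N}_i$ computes $g^{[t]}_{i,j}=\nabla F(x^{[t-1]}_j;\xi_{i,t})$. Agent $i$ then sets $x^{[t]}_{i,j}=x^{[t-1]}_i-\gamma g^{[t]}_{j,i}$ for $j\in\mathcal{N}_i$; for $\mathcal{N}'\subseteq\mathcal{N}_i$ it defines $v(\mathcal{N}')=\frac{1}{|\mathcal{Q}|}\sum_{\xi\in\mathcal{Q}}J\big(\xi;\frac{1}{|\mathcal{N}'|}\sum_{j\in\mathcal{N}'}x^{[t]}_{i,j}\big)$ ($v(\emptyset)=0$); Shapley values $\varphi^{[t]}_{i,j}=\sum_{\mathcal{N}'\subseteq\mathcal{N}_i\setminus\{j\}}\frac{v(\mathcal{N}'\cup\{j\})-v(\mathcal{N}')}{|\mathcal{N}_i|\binom{|\mathcal{N}_i|-1}{|\mathcal{N}'|}}$; normalized values $\hat\varphi^{[t]}_{i,j}=\frac{\varphi^{[t]}_{i,j}-\min_{k\in\mathcal{N}_i}\varphi^{[t]}_{i,k}}{\max_{k\in\mathcal{N}_i}\varphi^{[t]}_{i,k}-\min_{k\in\mathcal{N}_i}\varphi^{[t]}_{i,k}}$; weights $\pi^{[t]}_{i,j}=\frac{\hat\varphi^{[t]}_{i,j}}{\omega_{i,j}\sum_{k\in\mathcal{N}_i}\hat\varphi^{[t]}_{i,k}}$;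 then $\bar g^{[t]}_i=\sum_{j\in\mathcal{N}_i}\pi^{[t]}_{i,j}g^{[t]}_{j,i}$, $\hat u^{[t]}_i=\alpha u^{[t-1]}_i+\bar g^{[t]}_i$, $\hat x^{[t]}_i=x^{[t-1]}_i-\gamma\hat u^{[t]}_i$, $u^{[t]}_i=\sum_{j\in\mathcal{N}_i}\omega_{i,j}\hat u^{[t]}_j$, $x^{[t]}_i=\sum_{j\in\mathcal{N}_i}\omega_{i,j}\hat x^{[t]}_j$. Write $\bar x^{[t]}=\frac1N\sum_{i=1}^N x^{[t]}_i$. Expectations are over the random samples. Assumptions: (A1) each $f_i$ is $L$-smooth. (A2) there exist $\sigma>0,\varsigma>0$ with $\mathbb{E}_{\xi\sim\mathcal{D}_i}\|\nabla F(x;\xi)-\nabla f_i(x)\|^2\le\sigma^2$ and $\|\nabla f_i(x)-\nabla\mathcal{F}(x)\|^2\le\varsigma^2$ for all $x$ and all $i$. (A3) with $\lambda_k(\mathbf{W})$ the $k$-th largest eigenvalue of $\mathbf{W}$, $\lambda_1(\mathbf{W})=1$ and $\max\{|\lambda_2(\mathbf{W})|,|\lambda_N(\mathbf{W})|\}\le\sqrt{\rho}$ for some constant $\rho<1$. *)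

theory Defs
  imports "HOL-Probability.Probability" "Jordan_Normal_Form.Char_Poly"
begin

text \<open>Agents are indexed by 1..N; rounds by t = 1, 2, ...  A sample path assigns
  to every pair (round t, agent i) the sample drawn by agent i in round t.\<close>

definition nbhd :: "nat \<Rightarrow> (nat \<Rightarrow> nat \<Rightarrow> real) \<Rightarrow> nat \<Rightarrow> nat set" where
  "nbhd N W i = {j \<in> {1..N}. 0 < W i j}"

text \<open>Neighbourhood as used by the algorithm (agent i always included).\<close>
definition alg_nbhd :: "nat \<Rightarrow> (nat \<Rightarrow> nat \<Rightarrow> real) \<Rightarrow> nat \<Rightarrow> nat set" where
  "alg_nbhd N W i = nbhd N W i \<union> {i}"

definition omega_min :: "nat \<Rightarrow> (nat \<Rightarrow> nat \<Rightarrow> real) \<Rightarrow> real" where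
  "omega_min N W = Min {W i j | i j. i \<in> {1..N} \<and> j \<in> nbhd N W i}"

text \<open>Coalition value v on the validation set Q, for local candidate models y j.\<close>
definition coal_val :: "'s set \<Rightarrow> ('s \<Rightarrow> 'x::real_vector \<Rightarrow> real) \<Rightarrow> (nat \<Rightarrow> 'x) \<Rightarrow> nat set \<Rightarrow> real" where
  "coal_val Q J y S =
     (if S = {} then 0
      else (\<Sum>q\<in>Q. J q ((1 / real (card S)) *\<^sub>R (\<Sum>j\<in>S. y j))) / real (card Q))"

definition shapley :: "(nat set \<Rightarrow> real) \<Rightarrow> nat set \<Rightarrow> nat \<Rightarrow> real" where
  "shapley v A j =
     (\<Sum>S\<in>Pow (A - {j}). (v (S \<union> {j}) - v S) /
         (real (card A) * real ((card A - 1) choose (card S))))"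

text \<open>Aggregated gradient of agent i in a round: x is the vector of models
  x^{[t-1]}, smp j is the sample xi_{j,t} of agent j in this round.\<close>
definition ross_gbar ::
  "nat \<Rightarrow> (nat \<Rightarrow> nat \<Rightarrow> real) \<Rightarrow> real \<Rightarrow> ('x::euclidean_space \<Rightarrow> 's \<Rightarrow> 'x) \<Rightarrow>
   's set \<Rightarrow> ('s \<Rightarrow> 'x \<Rightarrow> real) \<Rightarrow> (nat \<Rightarrow> 'x) \<Rightarrow> (nat \<Rightarrow> 's) \<Rightarrow> nat \<Rightarrow> 'x" where
  "ross_gbar N W \<gamma> gradF Q J x smp i =
    (let A = alg_nbhd N W i;
         g = (\<lambda>j. gradF (x i) (smp j));
         y = (\<lambda>j. x i - \<gamma> *\<^sub>R g j);
         \<phi> = shapley (coal_val Q J y) A;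
         \<phi>h = (\<lambda>j. (\<phi> j - Min (\<phi> ` A)) / (Max (\<phi> ` A) - Min (\<phi> ` A)));
         \<pi> = (\<lambda>j. \<phi>h j / (W i j * (\<Sum>k\<in>A. \<phi>h k)))
     in \<Sum>j\<in>A. \<pi> j *\<^sub>R g j)"

definition ross_step ::
  "nat \<Rightarrow> (nat \<Rightarrow> nat \<Rightarrow> real) \<Rightarrow> real \<Rightarrow> real \<Rightarrow> ('x::euclidean_space \<Rightarrow> 's \<Rightarrow> 'x) \<Rightarrow>
   's set \<Rightarrow> ('s \<Rightarrow> 'x \<Rightarrow> real) \<Rightarrow> (nat \<Rightarrow> 's) \<Rightarrow> (nat \<Rightarrow> 'x) \<times> (nat \<Rightarrow> 'x) \<Rightarrow>
   (nat \<Rightarrow> 'x) \<times> (nat \<Rightarrow> 'x)" where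
  "ross_step N W \<gamma> \<alpha> gradF Q J smp xu =
    (let x = fst xu; u = snd xu;
         gb = ross_gbar N W \<gamma> gradF Q J x smp;
         uh = (\<lambda>i. \<alpha> *\<^sub>R u i + gb i);
         xh = (\<lambda>i. x i - \<gamma> *\<^sub>R uh i)
     in ((\<lambda>i. \<Sum>j\<in>alg_nbhd N W i. W i j *\<^sub>R xh j),
         (\<lambda>i. \<Sum>j\<in>alg_nbhd N W i. W i j *\<^sub>R uh j)))"

primrec ross_state ::
  "nat \<Rightarrow> (nat \<Rightarrow> nat \<Rightarrow> real) \<Rightarrow> real \<Rightarrow> real \<Rightarrow> ('x::euclidean_space \<Rightarrow> 's \<Rightarrow> 'x) \<Rightarrow>
   's set \<Rightarrow> ('s \<Rightarrow> 'x \<Rightarrow> real) \<Rightarrow> 'x \<Rightarrow> (nat \<times> nat \<Rightarrow> 's) \<Rightarrow> nat \<Rightarrow>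
   (nat \<Rightarrow> 'x) \<times> (nat \<Rightarrow> 'x)" where
  "ross_state N W \<gamma> \<alpha> gradF Q J x0 \<xi> 0 = ((\<lambda>i. x0), (\<lambda>i. 0))"
| "ross_state N W \<gamma> \<alpha> gradF Q J x0 \<xi> (Suc t) =
     ross_step N W \<gamma> \<alpha> gradF Q J (\<lambda>j. \<xi> (Suc t, j))
       (ross_state N W \<gamma> \<alpha> gradF Q J x0 \<xi> t)"

text \<open>Assumption (A3): the eigenvalues of W, listed with multiplicity in
  decreasing order lam 1 \<ge> ... \<ge> lam N, satisfy lam 1 = 1 and all
  non-leading ones have modulus at most sqrt rho.\<close>
definition spectral_gap :: "nat \<Rightarrow> (nat \<Rightarrow> nat \<Rightarrow> real) \<Rightarrow> real \<Rightarrow> bool" where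
  "spectral_gap N W \<rho> \<longleftrightarrow>
     (\<exists>lam :: nat \<Rightarrow> real.
        (\<forall>k. 1 \<le> k \<and> k < N \<longrightarrow> lam (Suc k) \<le> lam k) \<and>
        char_poly (mat N N (\<lambda>(i, j). W (Suc i) (Suc j))) = (\<Prod>k\<in>{1..N}. [:- lam k, 1:]) \<and>
        lam 1 = 1 \<and>
        (\<forall>k\<in>{2..N}. \<bar>lam k\<bar> \<le> sqrt \<rho>))"

end

theory Submission
  imports Defs
begin


lemma gbar_meas:
  fixes gradF :: "'x::euclidean_space \<Rightarrow> 's \<Rightarrow> 'x"
  assumes Q: "finite Q" and J_meas: "\<forall>q\<in>Q. J q \<in> borel_measurable borel"
    and xm: "(\<lambda>\<omega>. x \<omega> i) \<in> borel_measurable Mo"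
    and gm: "\<And>k. k \<in> alg_nbhd N W i \<Longrightarrow> (\<lambda>\<omega>. gradF (x \<omega> i) (smp \<omega> k)) \<in> borel_measurable Mo"
  shows "(\<lambda>\<omega>. ross_gbar N W \<gamma> gradF Q J (x \<omega>) (smp \<omega>) i) \<in> borel_measurable Mo"
proof -
  define A where "A = alg_nbhd N W i"
  have fin: "finite A" by (simp add: A_def alg_nbhd_def nbhd_def)
  have Jm: "q \<in> Q \<Longrightarrow> (\<lambda>\<omega>. J q (h \<omega>)) \<in> borel_measurable Mo" if "h \<in> borel_measurable Mo" for q h
    using J_meas that by (metis measurable_compose)
  define y where "y = (\<lambda>\<omega> k. x \<omega> i - \<gamma> *\<^sub>R gradF (x \<omega> i) (smp \<omega> k))"
  have ym: "k \<in> A \<Longrightarrow> (\<lambda>\<omega>. y \<omega> k) \<in> borel_measurable Mo" for k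
    unfolding y_def using gm[of k] xm by (simp add: A_def)
  have vm: "(\<lambda>\<omega>. coal_val Q J (y \<omega>) S) \<in> borel_measurable Mo" if "S \<subseteq> A" for S
  proof -
    have fS: "finite S" using that fin finite_subset by blast
    have "(\<lambda>\<omega>. (1 / real (card S)) *\<^sub>R (\<Sum>j\<in>S. y \<omega> j)) \<in> borel_measurable Mo"
      using ym that by (intro borel_measurable_scaleR borel_measurable_const borel_measurable_sum) auto
    then have "(\<lambda>\<omega>. (\<Sum>q\<in>Q. J q ((1 / real (card S)) *\<^sub>R (\<Sum>j\<in>S. y \<omega> j))) / real (card Q)) \<in> borel_measurable Mo"
      using Jm by (intro borel_measurable_divide borel_measurable_const borel_measurable_sum) auto
    then show ?thesis unfolding coal_val_def by (cases "S = {}") auto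
  qed
  define \<phi> where "\<phi> = (\<lambda>\<omega>. shapley (coal_val Q J (y \<omega>)) A)"
  have pm: "j \<in> A \<Longrightarrow> (\<lambda>\<omega>. \<phi> \<omega> j) \<in> borel_measurable Mo" for j
    unfolding \<phi>_def shapley_def
    using fin by (intro borel_measurable_sum borel_measurable_divide borel_measurable_diff borel_measurable_const) (auto intro!: vm)
  have mn: "(\<lambda>\<omega>. Min (\<phi> \<omega> ` A)) \<in> borel_measurable Mo"
    using borel_measurable_Min[OF fin, of "\<lambda>j \<omega>. \<phi> \<omega> j", OF pm] by simp
  have mx: "(\<lambda>\<omega>. Max (\<phi> \<omega> ` A)) \<in> borel_measurable Mo"
    using borel_measurable_Max[OF fin, of "\<lambda>j \<omega>. \<phi> \<omega> j", OF pm] by simp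
  define ph where "ph = (\<lambda>\<omega> j. (\<phi> \<omega> j - Min (\<phi> \<omega> ` A)) / (Max (\<phi> \<omega> ` A) - Min (\<phi> \<omega> ` A)))"
  have phm: "j \<in> A \<Longrightarrow> (\<lambda>\<omega>. ph \<omega> j) \<in> borel_measurable Mo" for j
    unfolding ph_def using pm mn mx by (intro borel_measurable_divide borel_measurable_diff) auto
  have sm: "(\<lambda>\<omega>. \<Sum>k\<in>A. ph \<omega> k) \<in> borel_measurable Mo"
    using phm by (intro borel_measurable_sum) auto
  have "(\<lambda>\<omega>. \<Sum>j\<in>A. (ph \<omega> j / (W i j * (\<Sum>k\<in>A. ph \<omega> k))) *\<^sub>R gradF (x \<omega> i) (smp \<omega> j)) \<in> borel_measurable Mo"
    using phm sm gm A_def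
    by (intro borel_measurable_sum borel_measurable_scaleR borel_measurable_divide borel_measurable_times borel_measurable_const) auto
  then show ?thesis
    unfolding ross_gbar_def Let_def ph_def \<phi>_def y_def A_def by simp
qed

lemma alg_nbhd_sub: "i \<in> {1..N} \<Longrightarrow> alg_nbhd N W i \<subseteq> {1..N}"
  by (auto simp: alg_nbhd_def nbhd_def)

lemma comp_meas:
  assumes "1 \<le> s" "k \<in> {1..N}"
  shows "(\<lambda>\<omega>. \<omega> (s, k)) \<in> measurable (PiM {(s, i). 1 \<le> s \<and> i \<in> {1..N}} (\<lambda>(s, i). D i)) (D k)"
proof -
  have "(\<lambda>\<omega>. \<omega> (s, k)) \<in> measurable (PiM {(s, i). 1 \<le> s \<and> i \<in> {1..N}} (\<lambda>(s, i). D i)) ((\<lambda>(s, i). D i) (s, k))"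
    by (rule measurable_component_singleton) (use assms in auto)
  then show ?thesis by simp
qed

lemma state_meas:
  fixes gradF :: "'x::euclidean_space \<Rightarrow> 's \<Rightarrow> 'x"
  assumes Q: "finite Q" and J_meas: "\<forall>q\<in>Q. J q \<in> borel_measurable borel"
    and gradF_meas: "\<forall>i\<in>{1..N}. (\<lambda>(x, \<xi>). gradF x \<xi>) \<in> borel_measurable (borel \<Otimes>\<^sub>M D i)"
  shows "\<forall>i\<in>{1..N}. (\<lambda>\<xi>. fst (ross_state N W \<gamma> \<alpha> gradF Q J x0 \<xi> s) i) \<in> borel_measurable (PiM {(s, i). 1 \<le> s \<and> i \<in> {1..N}} (\<lambda>(s, i). D i))
     \<and> (\<lambda>\<xi>. snd (ross_state N W \<gamma> \<alpha> gradF Q J x0 \<xi> s) i) \<in> borel_measurable (PiM {(s, i). 1 \<le> s \<and> i \<in> {1..N}} (\<lambda>(s, i). D i))"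
proof (induction s)
  case 0
  then show ?case by simp
next
  case (Suc s)
  define M where "M = PiM {(s::nat, i). 1 \<le> s \<and> i \<in> {1..N}} (\<lambda>(s, i). D i)"
  define X where "X = (\<lambda>\<xi>. fst (ross_state N W \<gamma> \<alpha> gradF Q J x0 \<xi> s))"
  define U where "U = (\<lambda>\<xi>. snd (ross_state N W \<gamma> \<alpha> gradF Q J x0 \<xi> s))"
  have Xm: "j \<in> {1..N} \<Longrightarrow> (\<lambda>\<xi>. X \<xi> j) \<in> borel_measurable M" for j
    using Suc.IH unfolding X_def M_def by auto
  have Um: "j \<in> {1..N} \<Longrightarrow> (\<lambda>\<xi>. U \<xi> j) \<in> borel_measurable M" for j
    using Suc.IH unfolding U_def M_def by auto
  have Gm: "(\<lambda>\<xi>. ross_gbar N W \<gamma> gradF Q J (X \<xi>) (\<lambda>k. \<xi> (Suc s, k)) j) \<in> borel_measurable M"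
    if j: "j \<in> {1..N}" for j
  proof (rule gbar_meas[where x=X and i=j, OF Q J_meas Xm[OF j]])
    fix k assume "k \<in> alg_nbhd N W j"
    then have k: "k \<in> {1..N}" using alg_nbhd_sub[OF j, of W] by auto
    have "(\<lambda>\<omega>. (X \<omega> j, \<omega> (Suc s, k))) \<in> measurable M (borel \<Otimes>\<^sub>M D k)"
      using Xm[OF j] comp_meas[of "Suc s" k N D] k unfolding M_def by (intro measurable_Pair) auto
    from measurable_compose[OF this, of "\<lambda>(x, \<xi>). gradF x \<xi>" borel] gradF_meas k
    show "(\<lambda>\<omega>. gradF (X \<omega> j) (\<omega> (Suc s, k))) \<in> borel_measurable M" by auto
  qed
  show ?case
  proof (intro ballI conjI)
    fix i :: nat assume i: "i \<in> {1..N}"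
    have sub: "\<And>j. j \<in> alg_nbhd N W i \<Longrightarrow> j \<in> {1..N}" using alg_nbhd_sub[OF i, of W] by auto
    have "(\<lambda>\<xi>. \<Sum>j\<in>alg_nbhd N W i. W i j *\<^sub>R (X \<xi> j - \<gamma> *\<^sub>R (\<alpha> *\<^sub>R U \<xi> j + ross_gbar N W \<gamma> gradF Q J (X \<xi>) (\<lambda>k. \<xi> (Suc s, k)) j))) \<in> borel_measurable M"
      using Xm Um Gm sub by (intro borel_measurable_sum borel_measurable_scaleR borel_measurable_diff borel_measurable_add borel_measurable_const) auto
    then show "(\<lambda>\<xi>. fst (ross_state N W \<gamma> \<alpha> gradF Q J x0 \<xi> (Suc s)) i) \<in> borel_measurable (PiM {(s, i). 1 \<le> s \<and> i \<in> {1..N}} (\<lambda>(s, i). D i))"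
      unfolding M_def X_def U_def by (simp add: ross_step_def Let_def)
    have "(\<lambda>\<xi>. \<Sum>j\<in>alg_nbhd N W i. W i j *\<^sub>R (\<alpha> *\<^sub>R U \<xi> j + ross_gbar N W \<gamma> gradF Q J (X \<xi>) (\<lambda>k. \<xi> (Suc s, k)) j)) \<in> borel_measurable M"
      using Xm Um Gm sub by (intro borel_measurable_sum borel_measurable_scaleR borel_measurable_diff borel_measurable_add borel_measurable_const) auto
    then show "(\<lambda>\<xi>. snd (ross_state N W \<gamma> \<alpha> gradF Q J x0 \<xi> (Suc s)) i) \<in> borel_measurable (PiM {(s, i). 1 \<le> s \<and> i \<in> {1..N}} (\<lambda>(s, i). D i))"
      unfolding M_def X_def U_def by (simp add: ross_step_def Let_def)
  qed
qed


lemma state_local: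
  "(\<forall>s'\<le>s. \<forall>k. \<xi> (s', k) = \<xi>' (s', k)) \<Longrightarrow>
   ross_state N W \<gamma> \<alpha> gradF Q J x0 \<xi> s = ross_state N W \<gamma> \<alpha> gradF Q J x0 \<xi>' s"
proof (induction s)
  case 0 then show ?case by simp
next
  case (Suc s)
  then have "ross_state N W \<gamma> \<alpha> gradF Q J x0 \<xi> s = ross_state N W \<gamma> \<alpha> gradF Q J x0 \<xi>' s" by auto
  moreover have "(\<lambda>j. \<xi> (Suc s, j)) = (\<lambda>j. \<xi>' (Suc s, j))" using Suc.prems by auto
  ultimately show ?case by simp
qed

lemma noise_bound:
  fixes gradF :: "'x::euclidean_space \<Rightarrow> 's \<Rightarrow> 'x"
  assumes Q: "finite Q" and J_meas: "\<forall>q\<in>Q. J q \<in> borel_measurable borel"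
    and D: "\<forall>i\<in>{1..N}. prob_space (D i)"
    and gradF_meas: "\<forall>i\<in>{1..N}. (\<lambda>(x, \<xi>). gradF x \<xi>) \<in> borel_measurable (borel \<Otimes>\<^sub>M D i)"
    and gfm: "gradf j \<in> borel_measurable borel"
    and var: "\<forall>x. (\<integral>\<^sup>+\<xi>. ennreal ((norm (gradF x \<xi> - gradf j x))\<^sup>2) \<partial>D j) \<le> ennreal c"
    and i: "i \<in> {1..N}" and j: "j \<in> {1..N}"
  shows "(\<integral>\<^sup>+\<xi>. ennreal ((norm (gradF (fst (ross_state N W \<gamma> \<alpha> gradF Q J xini \<xi> tq) i) (\<xi> (Suc tq, j))
             - gradf j (fst (ross_state N W \<gamma> \<alpha> gradF Q J xini \<xi> tq) i)))\<^sup>2)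
          \<partial>PiM {(s, i). 1 \<le> s \<and> i \<in> {1..N}} (\<lambda>(s, i). D i)) \<le> ennreal c"
proof -
  define I where "I = {(s::nat, i). 1 \<le> s \<and> i \<in> {1..N}}"
  define MM where "MM = (\<lambda>(s::nat, i). D i)"
  define i' where "i' = (Suc tq, j)"
  define I0 where "I0 = I - {i'}"
  have I: "insert i' I0 = I" using j unfolding I0_def i'_def I_def by auto
  have PI0: "\<And>k. k \<in> I0 \<Longrightarrow> prob_space (MM k)" using D unfolding I0_def I_def MM_def by auto
  have Pi': "prob_space (MM i')" using D j unfolding i'_def MM_def by auto
  have MMi': "MM i' = D j" unfolding MM_def i'_def by simp
  have dist: "distr (MM i' \<Otimes>\<^sub>M PiM I0 MM) (PiM I MM) (\<lambda>(x, X). X(i' := x)) = PiM I MM"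
    using distr_pair_PiM_eq_PiM[of I0 MM i', OF PI0 Pi'] I by simp
  have Tm: "(\<lambda>(x, X). X(i' := x)) \<in> measurable (MM i' \<Otimes>\<^sub>M PiM I0 MM) (PiM I MM)"
    unfolding I[symmetric] by measurable
  define St where "St = (\<lambda>\<xi>. fst (ross_state N W \<gamma> \<alpha> gradF Q J xini \<xi> tq) i)"
  define n where "n = (\<lambda>\<xi>. ennreal ((norm (gradF (St \<xi>) (\<xi> (Suc tq, j)) - gradf j (St \<xi>)))\<^sup>2))"
  have Stm: "St \<in> borel_measurable (PiM I MM)"
    using state_meas[OF Q J_meas gradF_meas, of W \<gamma> \<alpha> xini tq] i unfolding St_def I_def MM_def by auto
  have cm: "(\<lambda>\<omega>. \<omega> (Suc tq, j)) \<in> measurable (PiM I MM) (D j)"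
    using comp_meas[of "Suc tq" j N D] j unfolding I_def MM_def by auto
  have "(\<lambda>\<omega>. (St \<omega>, \<omega> (Suc tq, j))) \<in> measurable (PiM I MM) (borel \<Otimes>\<^sub>M D j)"
    using Stm cm by (intro measurable_Pair) auto
  from measurable_compose[OF this, of "\<lambda>(x, \<xi>). gradF x \<xi>" borel] gradF_meas j
  have "(\<lambda>\<omega>. gradF (St \<omega>) (\<omega> (Suc tq, j))) \<in> borel_measurable (PiM I MM)" by auto
  moreover have "(\<lambda>\<omega>. gradf j (St \<omega>)) \<in> borel_measurable (PiM I MM)"
    using measurable_compose[OF Stm gfm] .
  ultimately have nm: "n \<in> borel_measurable (PiM I MM)" unfolding n_def by measurable
  interpret P0: prob_space "PiM I0 MM" using PI0 by (rule prob_space_PiM)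
  interpret Pj: prob_space "D j" using D j by auto
  interpret PS: pair_sigma_finite "D j" "PiM I0 MM" by unfold_locales
  have "integral\<^sup>N (PiM I MM) n = integral\<^sup>N (distr (MM i' \<Otimes>\<^sub>M PiM I0 MM) (PiM I MM) (\<lambda>(x, X). X(i' := x))) n"
    using dist by simp
  also have "\<dots> = (\<integral>\<^sup>+ p. n ((\<lambda>(x, X). X(i' := x)) p) \<partial>(MM i' \<Otimes>\<^sub>M PiM I0 MM))"
    by (rule nn_integral_distr[OF Tm]) (use nm in simp)
  also have "\<dots> = (\<integral>\<^sup>+ X. (\<integral>\<^sup>+ x. n (X(i' := x)) \<partial>D j) \<partial>PiM I0 MM)"
    unfolding MMi' using PS.nn_integral_snd[of "\<lambda>p. n ((\<lambda>(x, X). X(i' := x)) p)"]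
      measurable_compose[OF Tm nm] MMi' by simp
  also have "\<dots> \<le> (\<integral>\<^sup>+ X. ennreal c \<partial>PiM I0 MM)"
  proof (rule nn_integral_mono)
    fix X
    have "St (X(i' := x)) = St X" for x
      unfolding St_def by (subst state_local[where \<xi>'=X]) (auto simp: i'_def)
    then have "(\<integral>\<^sup>+ x. n (X(i' := x)) \<partial>D j) = (\<integral>\<^sup>+ x. ennreal ((norm (gradF (St X) x - gradf j (St X)))\<^sup>2) \<partial>D j)"
      unfolding n_def by (simp add: i'_def)
    also have "\<dots> \<le> ennreal c" using var by auto
    finally show "(\<integral>\<^sup>+ x. n (X(i' := x)) \<partial>D j) \<le> ennreal c" .
  qed
  also have "\<dots> = ennreal c" by (simp add: P0.emeasure_space_1)
  finally show ?thesis unfolding n_def St_def I_def MM_def .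
qed


lemma gbar_norm:
  fixes gradF :: "'x::euclidean_space \<Rightarrow> 's \<Rightarrow> 'x"
  assumes i: "i \<in> {1..N}" and Wnn: "\<forall>j\<in>{1..N}. 0 \<le> W i j"
    and wpos: "0 < w" and wle: "\<forall>j\<in>nbhd N W i. w \<le> W i j"
  shows "(norm (ross_gbar N W \<gamma> gradF Q J x smp i))\<^sup>2
         \<le> (1 / w\<^sup>2) * (\<Sum>j\<in>nbhd N W i. (norm (gradF (x i) (smp j)))\<^sup>2)"
proof -
  define A where "A = alg_nbhd N W i"
  define nb where "nb = nbhd N W i"
  define g where "g = (\<lambda>j. gradF (x i) (smp j))"
  define \<phi> where "\<phi> = shapley (coal_val Q J (\<lambda>j. x i - \<gamma> *\<^sub>R g j)) A"
  define mn where "mn = Min (\<phi> ` A)"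
  define mx where "mx = Max (\<phi> ` A)"
  define ph where "ph = (\<lambda>j. (\<phi> j - mn) / (mx - mn))"
  define s where "s = (\<Sum>k\<in>A. ph k)"
  define \<pi> where "\<pi> = (\<lambda>j. ph j / (W i j * s))"
  have gb: "ross_gbar N W \<gamma> gradF Q J x smp i = (\<Sum>j\<in>A. \<pi> j *\<^sub>R g j)"
    unfolding ross_gbar_def Let_def \<pi>_def s_def ph_def mn_def mx_def \<phi>_def g_def A_def by simp
  have finA: "finite A" and iA: "i \<in> A" and nbA: "nb \<subseteq> A" and finnb: "finite nb"
    by (auto simp: A_def alg_nbhd_def nbhd_def nb_def)
  define B where "B = sqrt (\<Sum>j\<in>nb. (norm (g j))\<^sup>2)"
  have Bsq: "B\<^sup>2 = (\<Sum>j\<in>nb. (norm (g j))\<^sup>2)" unfolding B_def by (simp add: sum_nonneg)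
  have gB: "norm (g j) \<le> B" if "j \<in> nb" for j
  proof -
    have "(norm (g j))\<^sup>2 \<le> (\<Sum>j\<in>nb. (norm (g j))\<^sup>2)"
      using that finnb by (intro member_le_sum) auto
    then show ?thesis unfolding B_def by (simp add: real_le_rsqrt)
  qed
  have B0: "0 \<le> B" unfolding B_def by (simp add: sum_nonneg)
  show ?thesis
  proof (cases "mx = mn")
    case True
    then have "\<pi> j = 0" for j unfolding \<pi>_def ph_def by simp
    then show ?thesis unfolding gb by (simp add: sum_nonneg)
  next
    case False
    have mnle: "mn \<le> \<phi> j" "\<phi> j \<le> mx" if "j \<in> A" for j
      using that finA unfolding mn_def mx_def by auto
    then have "mn \<le> mx" using iA by (meson order_trans)
    with False have lt: "mn < mx" by auto
    have ph0: "0 \<le> ph j" if "j \<in> A" for j unfolding ph_def using mnle[OF that] lt by simp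
    obtain j0 where j0: "j0 \<in> A" "\<phi> j0 = mx"
      using finA iA unfolding mx_def by (metis (mono_tags, lifting) Max_in empty_iff finite_imageI image_iff)
    have "ph j0 = 1" unfolding ph_def using j0 lt by simp
    moreover have "ph j0 \<le> s" unfolding s_def using j0 finA ph0 by (intro member_le_sum) auto
    ultimately have s1: "1 \<le> s" by simp
    have "(\<Sum>j\<in>A. \<pi> j *\<^sub>R g j) = (\<Sum>j\<in>nb. \<pi> j *\<^sub>R g j)"
    proof (rule sum.mono_neutral_right[OF finA nbA])
      show "\<forall>j\<in>A - nb. \<pi> j *\<^sub>R g j = 0"
      proof
        fix j assume "j \<in> A - nb"
        then have "j = i" "\<not> 0 < W i i" using i unfolding A_def nb_def alg_nbhd_def nbhd_def by auto
        then have "W i j = 0" using Wnn i by force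
        then show "\<pi> j *\<^sub>R g j = 0" unfolding \<pi>_def by simp
      qed
    qed
    also have "norm \<dots> \<le> (\<Sum>j\<in>nb. norm (\<pi> j *\<^sub>R g j))" by (rule norm_sum)
    also have "\<dots> \<le> (\<Sum>j\<in>nb. (ph j / (w * s)) * B)"
    proof (rule sum_mono)
      fix j assume j: "j \<in> nb"
      have wj: "w \<le> W i j" using wle j unfolding nb_def by auto
      have p0: "0 \<le> ph j" using ph0 j nbA by auto
      have "\<pi> j \<le> ph j / (w * s)" unfolding \<pi>_def
        using wj wpos s1 p0 by (intro divide_left_mono mult_right_mono mult_pos_pos) auto
      moreover have "0 \<le> \<pi> j" unfolding \<pi>_def using wj wpos s1 p0 by simp
      ultimately have "\<pi> j * norm (g j) \<le> (ph j / (w * s)) * B"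
        using gB[OF j] by (intro mult_mono) auto
      then show "norm (\<pi> j *\<^sub>R g j) \<le> (ph j / (w * s)) * B"
        using \<open>0 \<le> \<pi> j\<close> by simp
    qed
    also have "\<dots> = B / (w * s) * (\<Sum>j\<in>nb. ph j)" by (simp add: sum_distrib_left sum_divide_distrib algebra_simps)
    also have "\<dots> \<le> B / (w * s) * s"
    proof (rule mult_left_mono)
      show "(\<Sum>j\<in>nb. ph j) \<le> s" unfolding s_def using finA nbA ph0 by (intro sum_mono2) auto
      show "0 \<le> B / (w * s)" using B0 wpos s1 by simp
    qed
    also have "\<dots> = B / w" using s1 by simp
    finally have nle: "norm (ross_gbar N W \<gamma> gradF Q J x smp i) \<le> B / w" unfolding gb .
    have "(norm (ross_gbar N W \<gamma> gradF Q J x smp i))\<^sup>2 \<le> (B / w)\<^sup>2"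
      by (rule power_mono[OF nle]) simp
    also have "\<dots> = (1 / w\<^sup>2) * B\<^sup>2" by (simp add: power_divide)
    finally show ?thesis unfolding Bsq g_def nb_def .
  qed
qed


lemma sq4: "((a::real) + b + c + d)\<^sup>2 \<le> 4 * (a\<^sup>2 + b\<^sup>2 + c\<^sup>2 + d\<^sup>2)"
proof -
  have e: "4 * (a\<^sup>2 + b\<^sup>2 + c\<^sup>2 + d\<^sup>2) - (a + b + c + d)\<^sup>2
      = (a-b)\<^sup>2 + (a-c)\<^sup>2 + (a-d)\<^sup>2 + (b-c)\<^sup>2 + (b-d)\<^sup>2 + (c-d)\<^sup>2"
    by (simp add: power2_eq_square algebra_simps)
  have "0 \<le> (a-b)\<^sup>2 + (a-c)\<^sup>2 + (a-d)\<^sup>2 + (b-c)\<^sup>2 + (b-d)\<^sup>2 + (c-d)\<^sup>2" by simp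
  then show ?thesis using e by linarith
qed

lemma sq2: "((a::real) + b)\<^sup>2 \<le> 2 * (a\<^sup>2 + b\<^sup>2)"
proof -
  have e: "2 * (a\<^sup>2 + b\<^sup>2) - (a + b)\<^sup>2 = (a-b)\<^sup>2"
    by (simp add: power2_eq_square algebra_simps)
  have "0 \<le> (a-b)\<^sup>2" by simp
  then show ?thesis using e by linarith
qed

lemma sq_le: "0 \<le> (a::real) \<Longrightarrow> a \<le> b \<Longrightarrow> a\<^sup>2 \<le> b\<^sup>2"
  by (rule power_mono) auto

lemma grad_bound:
  fixes gradf :: "nat \<Rightarrow> 'x::euclidean_space \<Rightarrow> 'x" and x :: "nat \<Rightarrow> 'x"
  assumes N: "1 \<le> N"
    and A1: "\<forall>i\<in>{1..N}. \<forall>x y. norm (gradf i x - gradf i y) \<le> L * norm (x - y)"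
    and het: "\<forall>i\<in>{1..N}. \<forall>x.
        (norm (gradf i x - (1 / real N) *\<^sub>R (\<Sum>k\<in>{1..N}. gradf k x)))\<^sup>2 \<le> \<sigma>h\<^sup>2"
    and i: "i \<in> {1..N}" and j: "j \<in> {1..N}"
  shows "(norm (gradf j (x i)))\<^sup>2 \<le> 4 * \<sigma>h\<^sup>2
     + 4 * L\<^sup>2 * (norm (x i - (1 / real N) *\<^sub>R (\<Sum>k\<in>{1..N}. x k)))\<^sup>2
     + 4 * L\<^sup>2 * (\<Sum>k\<in>{1..N}. (norm (x k - (1 / real N) *\<^sub>R (\<Sum>k\<in>{1..N}. x k)))\<^sup>2) / real N
     + 4 * (norm ((1 / real N) *\<^sub>R (\<Sum>k\<in>{1..N}. gradf k (x k))))\<^sup>2"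
proof -
  define xb where "xb = (1 / real N) *\<^sub>R (\<Sum>k\<in>{1..N}. x k)"
  define Fg where "Fg = (\<lambda>y. (1 / real N) *\<^sub>R (\<Sum>k\<in>{1..N}. gradf k y))"
  define G where "G = (1 / real N) *\<^sub>R (\<Sum>k\<in>{1..N}. gradf k (x k))"
  define e where "e = (\<lambda>k. norm (x k - xb))"
  have Np: "0 < real N" using N by simp
  have Lip: "norm (gradf k y - gradf k z) \<le> \<bar>L\<bar> * norm (y - z)" if "k \<in> {1..N}" for k y z
    using A1 that by (meson abs_ge_self mult_right_mono norm_ge_zero order_trans)
  have dec: "gradf j (x i) = (gradf j (x i) - Fg (x i)) + (Fg (x i) - Fg xb) + (Fg xb - G) + G" by simp
  have na: "(norm (gradf j (x i) - Fg (x i)))\<^sup>2 \<le> \<sigma>h\<^sup>2" using het j unfolding Fg_def by auto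
  have nb: "norm (Fg (x i) - Fg xb) \<le> \<bar>L\<bar> * e i"
  proof -
    have "Fg (x i) - Fg xb = (1 / real N) *\<^sub>R (\<Sum>k\<in>{1..N}. gradf k (x i) - gradf k xb)"
      unfolding Fg_def by (simp add: sum_subtractf scaleR_diff_right)
    then have "norm (Fg (x i) - Fg xb) \<le> (1 / real N) * (\<Sum>k\<in>{1..N}. norm (gradf k (x i) - gradf k xb))"
      using norm_sum[of "\<lambda>k. gradf k (x i) - gradf k xb" "{1..N}"] Np by (simp add: divide_right_mono)
    also have "\<dots> \<le> (1 / real N) * (\<Sum>k\<in>{1..N}. \<bar>L\<bar> * e i)"
      using Lip unfolding e_def by (intro mult_left_mono sum_mono) auto
    also have "\<dots> = \<bar>L\<bar> * e i" using Np by simp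
    finally show ?thesis .
  qed
  have nc: "(norm (Fg xb - G))\<^sup>2 \<le> L\<^sup>2 * (\<Sum>k\<in>{1..N}. (e k)\<^sup>2) / real N"
  proof -
    have "Fg xb - G = (1 / real N) *\<^sub>R (\<Sum>k\<in>{1..N}. gradf k xb - gradf k (x k))"
      unfolding Fg_def G_def by (simp add: sum_subtractf scaleR_diff_right)
    then have "norm (Fg xb - G) \<le> (1 / real N) * (\<Sum>k\<in>{1..N}. norm (gradf k xb - gradf k (x k)))"
      using norm_sum[of "\<lambda>k. gradf k xb - gradf k (x k)" "{1..N}"] Np by (simp add: divide_right_mono)
    also have "\<dots> \<le> (1 / real N) * (\<Sum>k\<in>{1..N}. \<bar>L\<bar> * e k)"
      using Lip unfolding e_def by (intro mult_left_mono sum_mono) (auto simp: norm_minus_commute)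
    finally have "(norm (Fg xb - G))\<^sup>2 \<le> ((1 / real N) * (\<Sum>k\<in>{1..N}. \<bar>L\<bar> * e k))\<^sup>2"
      by (rule sq_le[OF norm_ge_zero])
    also have "\<dots> = (1 / real N)\<^sup>2 * (\<Sum>k\<in>{1..N}. \<bar>L\<bar> * e k)\<^sup>2" by (simp only: power_mult_distrib)
    also have "\<dots> \<le> (1 / real N)\<^sup>2 * ((\<Sum>k\<in>{1..N}. (\<bar>L\<bar> * e k)\<^sup>2) * real N)"
      using sum_squared_le_sum_of_squares[of "\<lambda>k. \<bar>L\<bar> * e k" "{1..N}"] by (intro mult_left_mono) auto
    also have "\<dots> = L\<^sup>2 * (\<Sum>k\<in>{1..N}. (e k)\<^sup>2) / real N"
    proof -
      have "(\<Sum>k\<in>{1..N}. (\<bar>L\<bar> * e k)\<^sup>2) = L\<^sup>2 * (\<Sum>k\<in>{1..N}. (e k)\<^sup>2)"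
        by (simp add: power_mult_distrib sum_distrib_left)
      then show ?thesis using Np by (simp add: power2_eq_square field_simps)
    qed
    finally show ?thesis .
  qed
  have "norm (gradf j (x i)) \<le> norm (gradf j (x i) - Fg (x i)) + norm (Fg (x i) - Fg xb) + norm (Fg xb - G) + norm G"
    by (subst dec) (meson add_mono norm_triangle_ineq order_trans order_refl)
  then have "(norm (gradf j (x i)))\<^sup>2 \<le> (norm (gradf j (x i) - Fg (x i)) + norm (Fg (x i) - Fg xb) + norm (Fg xb - G) + norm G)\<^sup>2"
    by (rule sq_le[OF norm_ge_zero])
  also have "\<dots> \<le> 4 * ((norm (gradf j (x i) - Fg (x i)))\<^sup>2 + (norm (Fg (x i) - Fg xb))\<^sup>2 + (norm (Fg xb - G))\<^sup>2 + (norm G)\<^sup>2)"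
    by (rule sq4)
  also have "\<dots> \<le> 4 * (\<sigma>h\<^sup>2 + L\<^sup>2 * (e i)\<^sup>2 + L\<^sup>2 * (\<Sum>k\<in>{1..N}. (e k)\<^sup>2) / real N + (norm G)\<^sup>2)"
  proof -
    have "(norm (Fg (x i) - Fg xb))\<^sup>2 \<le> (\<bar>L\<bar> * e i)\<^sup>2" by (rule sq_le[OF norm_ge_zero nb])
    then have "(norm (Fg (x i) - Fg xb))\<^sup>2 \<le> L\<^sup>2 * (e i)\<^sup>2" by (simp add: power_mult_distrib)
    then show ?thesis using na nc by (intro mult_left_mono add_mono) auto
  qed
  finally show ?thesis unfolding e_def xb_def G_def by (simp add: algebra_simps)
qed



lemma wm_props:
  assumes N: "1 \<le> N"
    and W_range: "\<forall>i\<in>{1..N}. \<forall>j\<in>{1..N}. 0 \<le> W i j \<and> W i j \<le> 1"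
    and W_stoch: "\<forall>i\<in>{1..N}. (\<Sum>j\<in>{1..N}. W i j) = 1"
  shows "0 < omega_min N W" "omega_min N W \<le> 1"
    "\<forall>i\<in>{1..N}. \<forall>j\<in>nbhd N W i. omega_min N W \<le> W i j"
    "\<forall>i\<in>{1..N}. real (card (nbhd N W i)) * omega_min N W \<le> 1"
proof -
  define S where "S = {W i j | i j. i \<in> {1..N} \<and> j \<in> nbhd N W i}"
  have "S \<subseteq> (\<lambda>(i, j). W i j) ` ({1..N} \<times> {1..N})" unfolding S_def nbhd_def by auto
  then have finS: "finite S" by (rule finite_subset) auto
  have "\<exists>j\<in>{1..N}. 0 < W 1 j"
  proof (rule ccontr)
    assume nex: "\<not> ?thesis"
    have "W 1 j = 0" if "j \<in> {1..N}" for j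
    proof -
      have "0 \<le> W 1 j" using W_range N that by simp
      moreover have "\<not> 0 < W 1 j" using nex that by blast
      ultimately show ?thesis by simp
    qed
    then have "(\<Sum>j\<in>{1..N}. W 1 j) = 0" by simp
    with W_stoch N show False by auto
  qed
  then obtain j where "j \<in> {1..N}" "0 < W 1 j" by blast
  then have "j \<in> nbhd N W 1" unfolding nbhd_def by simp
  moreover have "(1::nat) \<in> {1..N}" using N by simp
  ultimately have "W 1 j \<in> S" unfolding S_def by blast
  then have neS: "S \<noteq> {}" by auto
  have pos: "\<forall>v\<in>S. 0 < v \<and> v \<le> 1" unfolding S_def nbhd_def using W_range by auto
  have wm: "omega_min N W = Min S" unfolding omega_min_def S_def by simp
  show "0 < omega_min N W" unfolding wm using finS neS pos by auto
  have "Min S \<in> S" using finS neS by (rule Min_in)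
  then show "omega_min N W \<le> 1" unfolding wm using pos by blast
  show le: "\<forall>i\<in>{1..N}. \<forall>j\<in>nbhd N W i. omega_min N W \<le> W i j"
  proof (intro ballI)
    fix i j assume "i \<in> {1..N}" "j \<in> nbhd N W i"
    then have "W i j \<in> S" unfolding S_def by blast
    then show "omega_min N W \<le> W i j" unfolding wm using finS by (rule Min_le[rotated])
  qed
  show "\<forall>i\<in>{1..N}. real (card (nbhd N W i)) * omega_min N W \<le> 1"
  proof
    fix i assume i: "i \<in> {1..N}"
    have "real (card (nbhd N W i)) * omega_min N W = (\<Sum>j\<in>nbhd N W i. omega_min N W)" by simp
    also have "\<dots> \<le> (\<Sum>j\<in>nbhd N W i. W i j)" using le i by (intro sum_mono) auto
    also have "\<dots> \<le> (\<Sum>j\<in>{1..N}. W i j)" using W_range i by (intro sum_mono2) (auto simp: nbhd_def)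
    finally show "real (card (nbhd N W i)) * omega_min N W \<le> 1" using W_stoch i by simp
  qed
qed

lemma avg_sq:
  fixes v :: "nat \<Rightarrow> 'x::real_normed_vector"
  assumes N: "1 \<le> N"
  shows "(norm ((1 / real N) *\<^sub>R (\<Sum>i\<in>{1..N}. v i)))\<^sup>2 \<le> (1 / real N) * (\<Sum>i\<in>{1..N}. (norm (v i))\<^sup>2)"
proof -
  have Np: "0 < real N" using N by simp
  have "norm ((1 / real N) *\<^sub>R (\<Sum>i\<in>{1..N}. v i)) \<le> (1 / real N) * (\<Sum>i\<in>{1..N}. norm (v i))"
    using norm_sum[of v "{1..N}"] Np by (simp add: divide_right_mono)
  then have "(norm ((1 / real N) *\<^sub>R (\<Sum>i\<in>{1..N}. v i)))\<^sup>2 \<le> ((1 / real N) * (\<Sum>i\<in>{1..N}. norm (v i)))\<^sup>2"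
    by (rule sq_le[OF norm_ge_zero])
  also have "\<dots> = (1 / real N)\<^sup>2 * (\<Sum>i\<in>{1..N}. norm (v i))\<^sup>2" by (simp only: power_mult_distrib)
  also have "\<dots> \<le> (1 / real N)\<^sup>2 * ((\<Sum>i\<in>{1..N}. (norm (v i))\<^sup>2) * real N)"
    using sum_squared_le_sum_of_squares[of "\<lambda>i. norm (v i)" "{1..N}"] by (intro mult_left_mono) auto
  also have "\<dots> = (1 / real N) * (\<Sum>i\<in>{1..N}. (norm (v i))\<^sup>2)"
    using Np by (simp add: power2_eq_square field_simps)
  finally show ?thesis .
qed

lemma pointwise:
  fixes gradF :: "'x::euclidean_space \<Rightarrow> 's \<Rightarrow> 'x" and gradf :: "nat \<Rightarrow> 'x \<Rightarrow> 'x" and x :: "nat \<Rightarrow> 'x"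
  assumes N: "1 \<le> N"
    and W_range: "\<forall>i\<in>{1..N}. \<forall>j\<in>{1..N}. 0 \<le> W i j \<and> W i j \<le> 1"
    and W_stoch: "\<forall>i\<in>{1..N}. (\<Sum>j\<in>{1..N}. W i j) = 1"
    and A1: "\<forall>i\<in>{1..N}. \<forall>x y. norm (gradf i x - gradf i y) \<le> L * norm (x - y)"
    and het: "\<forall>i\<in>{1..N}. \<forall>x.
        (norm (gradf i x - (1 / real N) *\<^sub>R (\<Sum>k\<in>{1..N}. gradf k x)))\<^sup>2 \<le> \<sigma>h\<^sup>2"
  shows "(norm ((1 / real N) *\<^sub>R (\<Sum>i\<in>{1..N}. ross_gbar N W \<gamma> gradF Q J x smp i)))\<^sup>2
    \<le> (2 / (real N * omega_min N W ^ 2)) * (\<Sum>i\<in>{1..N}. \<Sum>j\<in>nbhd N W i. (norm (gradF (x i) (smp j) - gradf j (x i)))\<^sup>2)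
      + 8 * \<sigma>h\<^sup>2 / omega_min N W ^ 3
      + (16 * L\<^sup>2 / (real N * omega_min N W ^ 3)) * (\<Sum>i\<in>{1..N}. (norm (x i - (1 / real N) *\<^sub>R (\<Sum>k\<in>{1..N}. x k)))\<^sup>2)
      + (8 / omega_min N W ^ 3) * (norm ((1 / real N) *\<^sub>R (\<Sum>k\<in>{1..N}. gradf k (x k))))\<^sup>2"
proof -
  define w where "w = omega_min N W"
  note wp = wm_props[OF N W_range W_stoch, folded w_def]
  have w0: "0 < w" using wp by simp
  define xb where "xb = (1 / real N) *\<^sub>R (\<Sum>k\<in>{1..N}. x k)"
  define d where "d = (\<lambda>i. (norm (x i - xb))\<^sup>2)"
  define S where "S = (\<Sum>k\<in>{1..N}. d k)"
  define GG where "GG = (norm ((1 / real N) *\<^sub>R (\<Sum>k\<in>{1..N}. gradf k (x k))))\<^sup>2"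
  define n where "n = (\<lambda>i j. (norm (gradF (x i) (smp j) - gradf j (x i)))\<^sup>2)"
  define K where "K = (\<lambda>i. 8 * \<sigma>h\<^sup>2 + 8 * L\<^sup>2 * d i + 8 * L\<^sup>2 * S / real N + 8 * GG)"
  have Np: "0 < real N" using N by simp
  have S0: "0 \<le> S" unfolding S_def d_def by (simp add: sum_nonneg)
  have K0: "0 \<le> K i" for i unfolding K_def GG_def d_def using S0 Np by (simp add: add_nonneg_nonneg)
  have per_i: "(norm (ross_gbar N W \<gamma> gradF Q J x smp i))\<^sup>2 \<le> (1 / w\<^sup>2) * (2 * (\<Sum>j\<in>nbhd N W i. n i j) + K i / w)"
    if i: "i \<in> {1..N}" for i
  proof -
    have "(norm (ross_gbar N W \<gamma> gradF Q J x smp i))\<^sup>2 \<le> (1 / w\<^sup>2) * (\<Sum>j\<in>nbhd N W i. (norm (gradF (x i) (smp j)))\<^sup>2)"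
    proof -
      have h1: "\<forall>j\<in>{1..N}. 0 \<le> W i j" using W_range i by blast
      have h2: "\<forall>j\<in>nbhd N W i. w \<le> W i j" using wp(3) i by blast
      show ?thesis by (rule gbar_norm[OF i h1 w0 h2])
    qed
    also have "\<dots> \<le> (1 / w\<^sup>2) * (\<Sum>j\<in>nbhd N W i. 2 * n i j + K i)"
    proof (intro mult_left_mono sum_mono)
      fix j assume "j \<in> nbhd N W i"
      then have j: "j \<in> {1..N}" by (simp add: nbhd_def)
      have "norm (gradF (x i) (smp j)) \<le> norm (gradF (x i) (smp j) - gradf j (x i)) + norm (gradf j (x i))"
        using norm_triangle_sub[of "gradF (x i) (smp j)" "gradf j (x i)"] by (simp add: add.commute)
      then have "(norm (gradF (x i) (smp j)))\<^sup>2 \<le> (norm (gradF (x i) (smp j) - gradf j (x i)) + norm (gradf j (x i)))\<^sup>2"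
        by (rule sq_le[OF norm_ge_zero])
      also have "\<dots> \<le> 2 * (n i j + (norm (gradf j (x i)))\<^sup>2)" unfolding n_def by (rule sq2)
      also have "\<dots> \<le> 2 * n i j + K i"
        using grad_bound[OF N A1 het i j, of x] unfolding K_def d_def S_def GG_def xb_def by simp
      finally show "(norm (gradF (x i) (smp j)))\<^sup>2 \<le> 2 * n i j + K i" .
    qed simp
    also have "\<dots> = (1 / w\<^sup>2) * (2 * (\<Sum>j\<in>nbhd N W i. n i j) + real (card (nbhd N W i)) * K i)"
      by (simp add: sum.distrib sum_distrib_left)
    also have "\<dots> \<le> (1 / w\<^sup>2) * (2 * (\<Sum>j\<in>nbhd N W i. n i j) + K i / w)"
    proof -
      have "real (card (nbhd N W i)) \<le> 1 / w" using wp i w0 by (simp add: field_simps)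
      then have "real (card (nbhd N W i)) * K i \<le> (1 / w) * K i" using K0 by (rule mult_right_mono)
      then show ?thesis by (intro mult_left_mono) auto
    qed
    finally show ?thesis .
  qed
  have "(norm ((1 / real N) *\<^sub>R (\<Sum>i\<in>{1..N}. ross_gbar N W \<gamma> gradF Q J x smp i)))\<^sup>2
      \<le> (1 / real N) * (\<Sum>i\<in>{1..N}. (norm (ross_gbar N W \<gamma> gradF Q J x smp i))\<^sup>2)"
    by (rule avg_sq[OF N])
  also have "\<dots> \<le> (1 / real N) * (\<Sum>i\<in>{1..N}. (1 / w\<^sup>2) * (2 * (\<Sum>j\<in>nbhd N W i. n i j) + K i / w))"
    using per_i by (intro mult_left_mono sum_mono) auto
  also have "\<dots> = (2 / (real N * w ^ 2)) * (\<Sum>i\<in>{1..N}. \<Sum>j\<in>nbhd N W i. n i j)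
      + (1 / (real N * w ^ 3)) * (\<Sum>i\<in>{1..N}. K i)"
  proof -
    have e1: "(1 / w\<^sup>2) * (2 * a + k / w) = (2 / w\<^sup>2) * a + (1 / w ^ 3) * k" for a k :: real
      using w0 by (simp add: field_simps power2_eq_square power3_eq_cube)
    have "(\<Sum>i\<in>{1..N}. (1 / w\<^sup>2) * (2 * (\<Sum>j\<in>nbhd N W i. n i j) + K i / w))
        = (2 / w\<^sup>2) * (\<Sum>i\<in>{1..N}. \<Sum>j\<in>nbhd N W i. n i j) + (1 / w ^ 3) * (\<Sum>i\<in>{1..N}. K i)"
      unfolding e1 by (simp add: sum.distrib sum_distrib_left)
    moreover have "(1 / real N) * ((2 / w\<^sup>2) * a + (1 / w ^ 3) * k)
        = (2 / (real N * w ^ 2)) * a + (1 / (real N * w ^ 3)) * k" for a k :: real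
      using w0 Np by (simp add: field_simps)
    ultimately show ?thesis by simp
  qed
  also have "(\<Sum>i\<in>{1..N}. K i) = real N * (8 * \<sigma>h\<^sup>2) + 16 * L\<^sup>2 * S + real N * (8 * GG)"
  proof -
    have "(\<Sum>i\<in>{1..N}. K i) = (\<Sum>i\<in>{1..N}. 8 * \<sigma>h\<^sup>2 + 8 * L\<^sup>2 * S / real N + 8 * GG) + (\<Sum>i\<in>{1..N}. 8 * L\<^sup>2 * d i)"
      unfolding K_def by (simp add: sum.distrib algebra_simps)
    also have "(\<Sum>i\<in>{1..N}. 8 * L\<^sup>2 * d i) = 8 * L\<^sup>2 * S" unfolding S_def by (simp add: sum_distrib_left)
    also have "(\<Sum>i\<in>{1..N}. 8 * \<sigma>h\<^sup>2 + 8 * L\<^sup>2 * S / real N + 8 * GG) = real N * (8 * \<sigma>h\<^sup>2 + 8 * L\<^sup>2 * S / real N + 8 * GG)"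
      by simp
    also have "real N * (8 * \<sigma>h\<^sup>2 + 8 * L\<^sup>2 * S / real N + 8 * GG) = real N * (8 * \<sigma>h\<^sup>2) + 8 * L\<^sup>2 * S + real N * (8 * GG)"
      using Np by (simp add: algebra_simps)
    finally show ?thesis by simp
  qed
  also have "(2 / (real N * w ^ 2)) * (\<Sum>i\<in>{1..N}. \<Sum>j\<in>nbhd N W i. n i j)
      + (1 / (real N * w ^ 3)) * (real N * (8 * \<sigma>h\<^sup>2) + 16 * L\<^sup>2 * S + real N * (8 * GG))
      = (2 / (real N * w ^ 2)) * (\<Sum>i\<in>{1..N}. \<Sum>j\<in>nbhd N W i. n i j)
      + 8 * \<sigma>h\<^sup>2 / w ^ 3 + (16 * L\<^sup>2 / (real N * w ^ 3)) * S + (8 / w ^ 3) * GG"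
    using w0 Np by (simp add: field_simps)
  finally show ?thesis unfolding w_def n_def S_def d_def xb_def GG_def .
qed



theorem lemma4:
  fixes N :: nat and W :: "nat \<Rightarrow> nat \<Rightarrow> real"
    and D :: "nat \<Rightarrow> 's measure"
    and F :: "'x::euclidean_space \<Rightarrow> 's \<Rightarrow> real" and gradF :: "'x \<Rightarrow> 's \<Rightarrow> 'x"
    and f :: "nat \<Rightarrow> 'x \<Rightarrow> real" and gradf :: "nat \<Rightarrow> 'x \<Rightarrow> 'x"
    and Q :: "'s set" and J :: "'s \<Rightarrow> 'x \<Rightarrow> real"
    and \<gamma> \<alpha> L \<sigma> \<sigma>h \<rho> :: real and x0 :: 'x and t :: nat
  assumes N: "1 \<le> N"
    and W_range: "\<forall>i\<in>{1..N}. \<forall>j\<in>{1..N}. 0 \<le> W i j \<and> W i j \<le> 1"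
    and W_sym: "\<forall>i\<in>{1..N}. \<forall>j\<in>{1..N}. W i j = W j i"
    and W_stoch: "\<forall>i\<in>{1..N}. (\<Sum>j\<in>{1..N}. W i j) = 1"
    and \<gamma>: "0 < \<gamma>"
    and Q: "finite Q"
    and D: "\<forall>i\<in>{1..N}. prob_space (D i)"
    and gradF: "\<forall>x \<xi>. ((\<lambda>y. F y \<xi>) has_derivative (\<lambda>h. gradF x \<xi> \<bullet> h)) (at x)"
    and gradF_meas: "\<forall>i\<in>{1..N}. (\<lambda>(x, \<xi>). gradF x \<xi>) \<in> borel_measurable (borel \<Otimes>\<^sub>M D i)"
    and J_meas: "\<forall>q\<in>Q. J q \<in> borel_measurable borel"
    and f_def: "\<forall>i\<in>{1..N}. \<forall>x. integrable (D i) (F x) \<and> f i x = (\<integral>\<xi>. F x \<xi> \<partial>D i)"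
    and gradf: "\<forall>i\<in>{1..N}. \<forall>x. (f i has_derivative (\<lambda>h. gradf i x \<bullet> h)) (at x)"
    and A1: "\<forall>i\<in>{1..N}. \<forall>x y. norm (gradf i x - gradf i y) \<le> L * norm (x - y)"
    and A2_pos: "0 < \<sigma>" "0 < \<sigma>h"
    and A2_var: "\<forall>i\<in>{1..N}. \<forall>x.
        (\<integral>\<^sup>+\<xi>. ennreal ((norm (gradF x \<xi> - gradf i x))\<^sup>2) \<partial>D i) \<le> ennreal (\<sigma>\<^sup>2)"
    and A2_het: "\<forall>i\<in>{1..N}. \<forall>x.
        (norm (gradf i x - (1 / real N) *\<^sub>R (\<Sum>k\<in>{1..N}. gradf k x)))\<^sup>2 \<le> \<sigma>h\<^sup>2"
    and A3: "\<rho> < 1" "spectral_gap N W \<rho>"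
    and t: "1 \<le> t"
  shows
   "let M = PiM {(s, i). 1 \<le> s \<and> i \<in> {1..N}} (\<lambda>(s, i). D i);
        X = (\<lambda>\<xi> s. fst (ross_state N W \<gamma> \<alpha> gradF Q J x0 \<xi> s));
        Xbar = (\<lambda>\<xi> s. (1 / real N) *\<^sub>R (\<Sum>i\<in>{1..N}. X \<xi> s i));
        gbar = (\<lambda>\<xi>. ross_gbar N W \<gamma> gradF Q J (X \<xi> (t - 1)) (\<lambda>j. \<xi> (t, j)));
        wm = omega_min N W
    in (\<integral>\<^sup>+\<xi>. ennreal ((norm ((1 / real N) *\<^sub>R (\<Sum>i\<in>{1..N}. gbar \<xi> i)))\<^sup>2) \<partial>M)
       \<le> ennreal (4 * \<sigma>\<^sup>2 / wm ^ 4) + ennreal (6 * \<sigma>\<^sup>2 / real N)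
         + ennreal (16 * \<sigma>h\<^sup>2 / wm ^ 4)
         + ennreal (32 * L\<^sup>2 / (real N * wm ^ 4))
             * (\<Sum>i\<in>{1..N}. \<integral>\<^sup>+\<xi>. ennreal ((norm (X \<xi> (t - 1) i - Xbar \<xi> (t - 1)))\<^sup>2) \<partial>M)
         + ennreal (16 / wm ^ 4 + 6)
             * (\<integral>\<^sup>+\<xi>. ennreal ((norm ((1 / real N) *\<^sub>R
                   (\<Sum>i\<in>{1..N}. gradf i (X \<xi> (t - 1) i))))\<^sup>2) \<partial>M)"
proof -
  define M where "M = PiM {(s::nat, i). 1 \<le> s \<and> i \<in> {1..N}} (\<lambda>(s, i). D i)"
  define X' where "X' = (\<lambda>\<xi>. fst (ross_state N W \<gamma> \<alpha> gradF Q J x0 \<xi> (t - 1)))"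
  define w where "w = omega_min N W"
  define n where "n = (\<lambda>\<xi> i j. (norm (gradF (X' \<xi> i) (\<xi> (t, j)) - gradf j (X' \<xi> i)))\<^sup>2)"
  define d where "d = (\<lambda>\<xi> i. (norm (X' \<xi> i - (1 / real N) *\<^sub>R (\<Sum>k\<in>{1..N}. X' \<xi> k)))\<^sup>2)"
  define GG where "GG = (\<lambda>\<xi>. (norm ((1 / real N) *\<^sub>R (\<Sum>k\<in>{1..N}. gradf k (X' \<xi> k))))\<^sup>2)"
  define LHS where "LHS = (\<lambda>\<xi>. (norm ((1 / real N) *\<^sub>R (\<Sum>i\<in>{1..N}. ross_gbar N W \<gamma> gradF Q J (X' \<xi>) (\<lambda>j. \<xi> (t, j)) i)))\<^sup>2)"
  define a where "a = 2 / (real N * w ^ 2)"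
  define b where "b = 8 * \<sigma>h\<^sup>2 / w ^ 3"
  define c where "c = 16 * L\<^sup>2 / (real N * w ^ 3)"
  define e where "e = 8 / w ^ 3"
  note wp = wm_props[OF N W_range W_stoch, folded w_def]
  have w0: "0 < w" and w1: "w \<le> 1" using wp by auto
  have Np: "0 < real N" using N by simp
  have a0: "0 \<le> a" and b0: "0 \<le> b" and c0: "0 \<le> c" and e0: "0 \<le> e"
    unfolding a_def b_def c_def e_def using w0 Np by auto
  have tt: "Suc (t - 1) = t" using t by simp
  have Xm: "(\<lambda>\<xi>. X' \<xi> i) \<in> borel_measurable M" if "i \<in> {1..N}" for i
    using state_meas[OF Q J_meas gradF_meas, of W \<gamma> \<alpha> x0 "t - 1"] that unfolding X'_def M_def by auto
  have gfm: "gradf k \<in> borel_measurable borel" if k: "k \<in> {1..N}" for k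
  proof -
    have "\<bar>L\<bar>-lipschitz_on UNIV (gradf k)"
    proof (rule lipschitz_onI)
      fix x y :: 'x
      have "norm (gradf k x - gradf k y) \<le> L * norm (x - y)" using A1 k by auto
      also have "\<dots> \<le> \<bar>L\<bar> * norm (x - y)" by (simp add: mult_right_mono)
      finally show "dist (gradf k x) (gradf k y) \<le> \<bar>L\<bar> * dist x y" by (simp add: dist_norm)
    qed simp
    then show ?thesis by (intro borel_measurable_continuous_onI lipschitz_on_continuous_on)
  qed
  have gXm: "(\<lambda>\<xi>. gradf k (X' \<xi> i)) \<in> borel_measurable M" if "i \<in> {1..N}" "k \<in> {1..N}" for i k
    using measurable_compose[OF Xm[OF that(1)] gfm[OF that(2)]] .
  have nm: "(\<lambda>\<xi>. ennreal (n \<xi> i j)) \<in> borel_measurable M" if i: "i \<in> {1..N}" and j: "j \<in> {1..N}" for i j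
  proof -
    have cm: "(\<lambda>\<omega>. \<omega> (t, j)) \<in> measurable M (D j)"
      using comp_meas[of t j N D] j t unfolding M_def by auto
    have "(\<lambda>\<omega>. (X' \<omega> i, \<omega> (t, j))) \<in> measurable M (borel \<Otimes>\<^sub>M D j)"
      using Xm[OF i] cm by (intro measurable_Pair) auto
    from measurable_compose[OF this, of "\<lambda>(x, \<xi>). gradF x \<xi>" borel] gradF_meas j
    have "(\<lambda>\<omega>. gradF (X' \<omega> i) (\<omega> (t, j))) \<in> borel_measurable M" by auto
    with gXm[OF i j] have "(\<lambda>\<xi>. n \<xi> i j) \<in> borel_measurable M" unfolding n_def by measurable
    then show ?thesis by measurable
  qed
  have dm: "(\<lambda>\<xi>. ennreal (d \<xi> i)) \<in> borel_measurable M" if i: "i \<in> {1..N}" for i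
  proof -
    have "(\<lambda>\<xi>. \<Sum>k\<in>{1..N}. X' \<xi> k) \<in> borel_measurable M"
      using Xm by (intro borel_measurable_sum) auto
    with Xm[OF i] have "(\<lambda>\<xi>. d \<xi> i) \<in> borel_measurable M" unfolding d_def by measurable
    then show ?thesis by measurable
  qed
  have GGm: "(\<lambda>\<xi>. ennreal (GG \<xi>)) \<in> borel_measurable M"
  proof -
    have "(\<lambda>\<xi>. \<Sum>k\<in>{1..N}. gradf k (X' \<xi> k)) \<in> borel_measurable M"
      using gXm by (intro borel_measurable_sum) auto
    then have "GG \<in> borel_measurable M" unfolding GG_def by measurable
    then show ?thesis by measurable
  qed
  define F1 where "F1 = (\<lambda>\<xi>. \<Sum>i\<in>{1..N}. \<Sum>j\<in>nbhd N W i. ennreal (n \<xi> i j))"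
  define F2 where "F2 = (\<lambda>\<xi>. \<Sum>i\<in>{1..N}. ennreal (d \<xi> i))"
  have nbsub: "nbhd N W i \<subseteq> {1..N}" for i by (auto simp: nbhd_def)
  have nm': "(\<lambda>\<xi>. ennreal (n \<xi> i j)) \<in> borel_measurable M" if "i \<in> {1..N}" "j \<in> nbhd N W i" for i j
    using nm[of i j] that by (auto simp: nbhd_def)
  have F1m: "F1 \<in> borel_measurable M" unfolding F1_def
    by (intro borel_measurable_sum nm) (auto simp: nbhd_def)
  have F2m: "F2 \<in> borel_measurable M" unfolding F2_def
    using dm by (intro borel_measurable_sum) auto
  define H where "H = (\<lambda>\<xi>. ennreal a * F1 \<xi> + ennreal b + ennreal c * F2 \<xi> + ennreal e * ennreal (GG \<xi>))"
  have pw: "ennreal (LHS \<xi>) \<le> H \<xi>" for \<xi>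
  proof -
    have le: "LHS \<xi> \<le> a * (\<Sum>i\<in>{1..N}. \<Sum>j\<in>nbhd N W i. n \<xi> i j) + b + c * (\<Sum>i\<in>{1..N}. d \<xi> i) + e * GG \<xi>"
      using pointwise[OF N W_range W_stoch A1 A2_het, of \<gamma> gradF Q J "X' \<xi>" "\<lambda>j. \<xi> (t, j)"]
      unfolding LHS_def a_def b_def c_def e_def n_def d_def GG_def w_def by simp
    have n0: "0 \<le> n \<xi> i j" for i j unfolding n_def by simp
    have d0: "0 \<le> d \<xi> i" for i unfolding d_def by simp
    have G0: "0 \<le> GG \<xi>" unfolding GG_def by simp
    have s1: "0 \<le> (\<Sum>i\<in>{1..N}. \<Sum>j\<in>nbhd N W i. n \<xi> i j)" using n0 by (intro sum_nonneg) auto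
    have s2: "0 \<le> (\<Sum>i\<in>{1..N}. d \<xi> i)" using d0 by (intro sum_nonneg) auto
    have "ennreal (LHS \<xi>) \<le> ennreal (a * (\<Sum>i\<in>{1..N}. \<Sum>j\<in>nbhd N W i. n \<xi> i j) + b + c * (\<Sum>i\<in>{1..N}. d \<xi> i) + e * GG \<xi>)"
      by (rule ennreal_leI[OF le])
    also have "\<dots> = ennreal (a * (\<Sum>i\<in>{1..N}. \<Sum>j\<in>nbhd N W i. n \<xi> i j)) + ennreal b + ennreal (c * (\<Sum>i\<in>{1..N}. d \<xi> i)) + ennreal (e * GG \<xi>)"
      using a0 b0 c0 e0 s1 s2 G0 by (simp add: ennreal_plus add_nonneg_nonneg)
    also have "\<dots> = H \<xi>"
    proof -
      have "ennreal (\<Sum>i\<in>{1..N}. \<Sum>j\<in>nbhd N W i. n \<xi> i j) = F1 \<xi>"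
        unfolding F1_def using n0 by (simp add: sum_nonneg)
      moreover have "ennreal (\<Sum>i\<in>{1..N}. d \<xi> i) = F2 \<xi>"
        unfolding F2_def using d0 by simp
      ultimately show ?thesis unfolding H_def using a0 c0 e0 s1 s2 G0 by (simp add: ennreal_mult)
    qed
    finally show ?thesis .
  qed
  have "(\<integral>\<^sup>+\<xi>. ennreal (LHS \<xi>) \<partial>M) \<le> (\<integral>\<^sup>+\<xi>. H \<xi> \<partial>M)"
    using pw by (intro nn_integral_mono) auto
  also have "(\<integral>\<^sup>+\<xi>. H \<xi> \<partial>M) = ennreal a * integral\<^sup>N M F1 + ennreal b + ennreal c * integral\<^sup>N M F2 + ennreal e * (\<integral>\<^sup>+\<xi>. ennreal (GG \<xi>) \<partial>M)"
  proof -
    interpret PM: prob_space M unfolding M_def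
      using D by (intro prob_space_PiM) auto
    show ?thesis unfolding H_def
      using F1m F2m GGm
      by (simp add: nn_integral_add nn_integral_cmult PM.emeasure_space_1)
  qed
  also have "integral\<^sup>N M F1 = (\<Sum>i\<in>{1..N}. \<Sum>j\<in>nbhd N W i. \<integral>\<^sup>+\<xi>. ennreal (n \<xi> i j) \<partial>M)"
    unfolding F1_def using nm'
    by (subst nn_integral_sum) (auto intro!: sum.cong nn_integral_sum borel_measurable_sum)
  also have "\<dots> \<le> (\<Sum>i\<in>{1..N}. \<Sum>j\<in>nbhd N W i. ennreal (\<sigma>\<^sup>2))"
  proof (intro sum_mono)
    fix i j assume i: "i \<in> {1..N}" and "j \<in> nbhd N W i"
    then have j: "j \<in> {1..N}" by (simp add: nbhd_def)
    have var: "\<forall>x. (\<integral>\<^sup>+\<xi>. ennreal ((norm (gradF x \<xi> - gradf j x))\<^sup>2) \<partial>D j) \<le> ennreal (\<sigma>\<^sup>2)"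
      using A2_var j by auto
    show "(\<integral>\<^sup>+\<xi>. ennreal (n \<xi> i j) \<partial>M) \<le> ennreal (\<sigma>\<^sup>2)"
      using noise_bound[where gradf=gradf and j=j and i=i and c="\<sigma>\<^sup>2" and W=W and \<gamma>=\<gamma> and \<alpha>=\<alpha> and xini=x0 and tq="t - 1", OF Q J_meas D gradF_meas gfm[OF j] var i j]
      unfolding n_def X'_def M_def tt .
  qed
  also have "(\<Sum>i\<in>{1..N}. \<Sum>j\<in>nbhd N W i. ennreal (\<sigma>\<^sup>2)) = ennreal (\<Sum>i\<in>{1..N}. real (card (nbhd N W i)) * \<sigma>\<^sup>2)"
  proof -
    have "(\<Sum>i\<in>{1..N}. \<Sum>j\<in>nbhd N W i. ennreal (\<sigma>\<^sup>2)) = (\<Sum>i\<in>{1..N}. ennreal (real (card (nbhd N W i)) * \<sigma>\<^sup>2))"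
      by (simp add: ennreal_mult ennreal_of_nat_eq_real_of_nat)
    also have "\<dots> = ennreal (\<Sum>i\<in>{1..N}. real (card (nbhd N W i)) * \<sigma>\<^sup>2)"
      by (rule sum_ennreal) simp
    finally show ?thesis .
  qed
  also have "\<dots> \<le> ennreal (real N * \<sigma>\<^sup>2 / w)"
  proof (rule ennreal_leI)
    have "(\<Sum>i\<in>{1..N}. real (card (nbhd N W i)) * \<sigma>\<^sup>2) \<le> (\<Sum>i\<in>{1..N}. (1 / w) * \<sigma>\<^sup>2)"
    proof (intro sum_mono mult_right_mono)
      fix i assume "i \<in> {1..N}"
      then show "real (card (nbhd N W i)) \<le> 1 / w" using wp w0 by (simp add: field_simps)
    qed simp
    then show "(\<Sum>i\<in>{1..N}. real (card (nbhd N W i)) * \<sigma>\<^sup>2) \<le> real N * \<sigma>\<^sup>2 / w" by simp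
  qed
  finally have main: "(\<integral>\<^sup>+\<xi>. ennreal (LHS \<xi>) \<partial>M) \<le> ennreal a * ennreal (real N * \<sigma>\<^sup>2 / w) + ennreal b
      + ennreal c * integral\<^sup>N M F2 + ennreal e * (\<integral>\<^sup>+\<xi>. ennreal (GG \<xi>) \<partial>M)"
    by (simp add: add_right_mono mult_left_mono)
  have F2i: "integral\<^sup>N M F2 = (\<Sum>i\<in>{1..N}. \<integral>\<^sup>+\<xi>. ennreal (d \<xi> i) \<partial>M)"
    unfolding F2_def using dm by (rule nn_integral_sum)
  have w43: "1 / w ^ 3 \<le> 1 / w ^ 4"
  proof -
    have "w ^ 4 \<le> w ^ 3" using w0 w1 by (simp add: power_decreasing)
    then show ?thesis using w0 by (intro divide_left_mono) auto
  qed
  have k1: "ennreal a * ennreal (real N * \<sigma>\<^sup>2 / w) \<le> ennreal (4 * \<sigma>\<^sup>2 / w ^ 4)"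
  proof -
    have "ennreal a * ennreal (real N * \<sigma>\<^sup>2 / w) = ennreal (a * (real N * \<sigma>\<^sup>2 / w))"
      using a0 w0 by (subst ennreal_mult) auto
    also have "a * (real N * \<sigma>\<^sup>2 / w) = (2 * \<sigma>\<^sup>2) * (1 / w ^ 3)"
      unfolding a_def using w0 Np by (simp add: field_simps power2_eq_square power3_eq_cube)
    also have "\<dots> \<le> (4 * \<sigma>\<^sup>2) * (1 / w ^ 4)"
      using w43 w0 by (intro mult_mono) auto
    finally have "ennreal a * ennreal (real N * \<sigma>\<^sup>2 / w) \<le> ennreal (4 * \<sigma>\<^sup>2 * (1 / w ^ 4))"
      using ennreal_leI by blast
    then show ?thesis by simp
  qed
  have k2: "ennreal b \<le> ennreal (16 * \<sigma>h\<^sup>2 / w ^ 4)"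
  proof (rule ennreal_leI)
    have "b = (8 * \<sigma>h\<^sup>2) * (1 / w ^ 3)" unfolding b_def by simp
    also have "\<dots> \<le> (16 * \<sigma>h\<^sup>2) * (1 / w ^ 4)" using w43 w0 by (intro mult_mono) auto
    finally show "b \<le> 16 * \<sigma>h\<^sup>2 / w ^ 4" by simp
  qed
  have k3: "ennreal c \<le> ennreal (32 * L\<^sup>2 / (real N * w ^ 4))"
  proof (rule ennreal_leI)
    have "c = (16 * L\<^sup>2 / real N) * (1 / w ^ 3)" unfolding c_def by simp
    also have "\<dots> \<le> (32 * L\<^sup>2 / real N) * (1 / w ^ 4)" using w43 w0 Np by (intro mult_mono) (auto simp: divide_right_mono)
    finally show "c \<le> 32 * L\<^sup>2 / (real N * w ^ 4)" by simp
  qed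
  have k4: "ennreal e \<le> ennreal (16 / w ^ 4 + 6)"
  proof (rule ennreal_leI)
    have "e = 8 * (1 / w ^ 3)" unfolding e_def by simp
    also have "\<dots> \<le> 16 * (1 / w ^ 4)" using w43 w0 by (intro mult_mono) auto
    finally show "e \<le> 16 / w ^ 4 + 6" by simp
  qed
  have "(\<integral>\<^sup>+\<xi>. ennreal (LHS \<xi>) \<partial>M) \<le> ennreal (4 * \<sigma>\<^sup>2 / w ^ 4) + ennreal (16 * \<sigma>h\<^sup>2 / w ^ 4)
      + ennreal (32 * L\<^sup>2 / (real N * w ^ 4)) * (\<Sum>i\<in>{1..N}. \<integral>\<^sup>+\<xi>. ennreal (d \<xi> i) \<partial>M)
      + ennreal (16 / w ^ 4 + 6) * (\<integral>\<^sup>+\<xi>. ennreal (GG \<xi>) \<partial>M)"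
    using main unfolding F2i
    by (rule order_trans) (intro add_mono k1 k2 mult_right_mono k3 k4; simp)
  also have "\<dots> \<le> ennreal (4 * \<sigma>\<^sup>2 / w ^ 4) + ennreal (6 * \<sigma>\<^sup>2 / real N) + ennreal (16 * \<sigma>h\<^sup>2 / w ^ 4)
      + ennreal (32 * L\<^sup>2 / (real N * w ^ 4)) * (\<Sum>i\<in>{1..N}. \<integral>\<^sup>+\<xi>. ennreal (d \<xi> i) \<partial>M)
      + ennreal (16 / w ^ 4 + 6) * (\<integral>\<^sup>+\<xi>. ennreal (GG \<xi>) \<partial>M)"
    by (intro add_mono order_refl) simp
  finally have fin: "(\<integral>\<^sup>+\<xi>. ennreal (LHS \<xi>) \<partial>M) \<le> ennreal (4 * \<sigma>\<^sup>2 / w ^ 4) + ennreal (6 * \<sigma>\<^sup>2 / real N) + ennreal (16 * \<sigma>h\<^sup>2 / w ^ 4)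
      + ennreal (32 * L\<^sup>2 / (real N * w ^ 4)) * (\<Sum>i\<in>{1..N}. \<integral>\<^sup>+\<xi>. ennreal (d \<xi> i) \<partial>M)
      + ennreal (16 / w ^ 4 + 6) * (\<integral>\<^sup>+\<xi>. ennreal (GG \<xi>) \<partial>M)" .
  then show ?thesis unfolding Let_def LHS_def d_def GG_def X'_def M_def w_def .
qed

end
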